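(* Let $G=(V,E)$ be a strongly connected digraph and $s\in V$. Let $e=(u,v)\in E$ with $T(u)\neq T(v)$, and let $r_v$ be the root of $T(v)$. Then either $u=d(v)$ and $e$ is a bridge of $G(s)$, or $u$ is a proper descendant of $r_v$ in $D(s)$.
   Context: For a digraph $G=(V,E)$ and $s\in V$ with every vertex reachable from $s$, $G(s)$ is the flow graph with start vertex $s$; $u$ dominates $w$ if every path from $s$ to $w$ contains $u$; the dominator tree $D(s)$ is the rooted tree on $V$ with root $s$ in which $u$ is an ancestor of $w$ iff $u$ dominates $w$; $d(w)$ is the parent of $w\neq s$. An edge $(u,w)$ is a bridge of $G(s)$ if every path from $s$ to $w$ contains it (then $u=d(w)$). A vertex $w\neq s$ is marked if $(d(w),w)$ is a bridge of $G(s)$. Deleting from $D(s)$ all edges $(d(w),w)$ with $w$ marked decomposes $D(s)$ into a forest of subtrees, each rooted at $s$ or at a marked vertex; $T(v)$ denotes the subtree containing $v$, and $r_v$ its root. *)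

theory Defs
  imports Main
begin

definition is_path :: "('a \<times> 'a) set \<Rightarrow> 'a list \<Rightarrow> bool" where
  "is_path E xs \<longleftrightarrow> xs \<noteq> [] \<and> (\<forall>i. Suc i < length xs \<longrightarrow> (xs ! i, xs ! Suc i) \<in> E)"

definition path_from_to :: "('a \<times> 'a) set \<Rightarrow> 'a \<Rightarrow> 'a \<Rightarrow> 'a list \<Rightarrow> bool" where
  "path_from_to E a b xs \<longleftrightarrow> is_path E xs \<and> hd xs = a \<and> last xs = b"

definition digraph :: "'a set \<Rightarrow> ('a \<times> 'a) set \<Rightarrow> bool" where
  "digraph V E \<longleftrightarrow> finite V \<and> E \<subseteq> V \<times> V"

definition strongly_connected :: "'a set \<Rightarrow> ('a \<times> 'a) set \<Rightarrow> bool" where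
  "strongly_connected V E \<longleftrightarrow> (\<forall>a\<in>V. \<forall>b\<in>V. \<exists>xs. path_from_to E a b xs)"

definition dominates :: "'a set \<Rightarrow> ('a \<times> 'a) set \<Rightarrow> 'a \<Rightarrow> 'a \<Rightarrow> 'a \<Rightarrow> bool" where
  "dominates V E s u w \<longleftrightarrow> u \<in> V \<and> w \<in> V \<and> (\<forall>xs. path_from_to E s w xs \<longrightarrow> u \<in> set xs)"

definition strictly_dominates :: "'a set \<Rightarrow> ('a \<times> 'a) set \<Rightarrow> 'a \<Rightarrow> 'a \<Rightarrow> 'a \<Rightarrow> bool" where
  "strictly_dominates V E s u w \<longleftrightarrow> dominates V E s u w \<and> u \<noteq> w"

text \<open>Parent d(w) of w in the dominator tree D(s): the immediate dominator.\<close>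
definition idom :: "'a set \<Rightarrow> ('a \<times> 'a) set \<Rightarrow> 'a \<Rightarrow> 'a \<Rightarrow> 'a" where
  "idom V E s w = (THE u. strictly_dominates V E s u w \<and>
       (\<forall>x. strictly_dominates V E s x w \<longrightarrow> dominates V E s x u))"

definition bridge :: "'a set \<Rightarrow> ('a \<times> 'a) set \<Rightarrow> 'a \<Rightarrow> 'a \<Rightarrow> 'a \<Rightarrow> bool" where
  "bridge V E s u w \<longleftrightarrow> (u, w) \<in> E \<and> w \<in> V \<and>
     (\<forall>xs. path_from_to E s w xs \<longrightarrow>
        (\<exists>i. Suc i < length xs \<and> xs ! i = u \<and> xs ! Suc i = w))"

definition marked :: "'a set \<Rightarrow> ('a \<times> 'a) set \<Rightarrow> 'a \<Rightarrow> 'a \<Rightarrow> bool" where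
  "marked V E s w \<longleftrightarrow> w \<in> V \<and> w \<noteq> s \<and> bridge V E s (idom V E s w) w"

text \<open>Root r_v of the subtree T(v): the deepest ancestor of v in D(s) (v itself included)
  that is s or a marked vertex.\<close>
definition tree_root :: "'a set \<Rightarrow> ('a \<times> 'a) set \<Rightarrow> 'a \<Rightarrow> 'a \<Rightarrow> 'a" where
  "tree_root V E s v = (THE r. dominates V E s r v \<and> (r = s \<or> marked V E s r) \<and>
       (\<forall>y. dominates V E s y v \<and> (y = s \<or> marked V E s y) \<longrightarrow> dominates V E s y r))"

end

theory Submission
  imports Defs
begin

lemma is_path_Cons:
  "is_path E (x # xs) \<longleftrightarrow> (xs = [] \<or> ((x, hd xs) \<in> E \<and> is_path E xs))"
proof
  assume h: "is_path E (x # xs)"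
  show "xs = [] \<or> ((x, hd xs) \<in> E \<and> is_path E xs)"
  proof (cases xs)
    case Nil then show ?thesis by simp
  next
    case (Cons y ys)
    have "(x, y) \<in> E" using h Cons unfolding is_path_def by fastforce
    moreover have "is_path E xs" unfolding is_path_def
    proof (intro conjI allI impI)
      show "xs \<noteq> []" using Cons by simp
      fix i assume "Suc i < length xs"
      then have "Suc (Suc i) < length (x # xs)" by simp
      then have "((x#xs) ! Suc i, (x#xs) ! Suc (Suc i)) \<in> E" using h unfolding is_path_def by blast
      then show "(xs ! i, xs ! Suc i) \<in> E" by simp
    qed
    ultimately show ?thesis using Cons by simp
  qed
next
  assume h: "xs = [] \<or> ((x, hd xs) \<in> E \<and> is_path E xs)"
  show "is_path E (x # xs)" unfolding is_path_def
  proof (intro conjI allI impI)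
    show "x # xs \<noteq> []" by simp
    fix i assume i: "Suc i < length (x # xs)"
    show "((x # xs) ! i, (x # xs) ! Suc i) \<in> E"
    proof (cases i)
      case 0
      then show ?thesis using h i by (cases xs) auto
    next
      case (Suc j)
      then show ?thesis using h i unfolding is_path_def by auto
    qed
  qed
qed

lemma is_path_single[simp]: "is_path E [x]"
  by (simp add: is_path_Cons)

lemma is_path_append:
  "xs \<noteq> [] \<Longrightarrow> ys \<noteq> [] \<Longrightarrow>
   is_path E (xs @ ys) \<longleftrightarrow> (is_path E xs \<and> is_path E ys \<and> (last xs, hd ys) \<in> E)"
proof (induction xs)
  case Nil then show ?case by simp
next
  case (Cons x xs)
  show ?case
  proof (cases xs)
    case Nil
    then show ?thesis using Cons.prems by (auto simp add: is_path_Cons)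
  next
    case (Cons y zs)
    then show ?thesis using Cons.IH Cons.prems by (simp add: is_path_Cons)
  qed
qed

lemma is_path_prefix:
  assumes "is_path E (xs @ ys)" "xs \<noteq> []"
  shows "is_path E xs"
proof (cases ys)
  case Nil then show ?thesis using assms by simp
next
  case (Cons y zs) then show ?thesis using assms is_path_append[of xs ys E] by simp
qed

lemma is_path_suffix:
  assumes "is_path E (xs @ ys)" "ys \<noteq> []"
  shows "is_path E ys"
proof (cases xs)
  case Nil then show ?thesis using assms by simp
next
  case (Cons y zs) then show ?thesis using assms is_path_append[of xs ys E] by simp
qed

lemma path_snoc:
  assumes "path_from_to E a b p" "(b, c) \<in> E"
  shows "path_from_to E a c (p @ [c])"
proof -
  have ne: "p \<noteq> []" using assms unfolding path_from_to_def is_path_def by simp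
  then show ?thesis using assms unfolding path_from_to_def by (auto simp: is_path_append)
qed

lemma path_ne: "path_from_to E a b p \<Longrightarrow> p \<noteq> []"
  unfolding path_from_to_def is_path_def by simp

lemma path_split:
  assumes "path_from_to E a b (ys @ x # zs)"
  shows "path_from_to E a x (ys @ [x])"
proof -
  have "is_path E ((ys @ [x]) @ zs)" using assms unfolding path_from_to_def by simp
  then have "is_path E (ys @ [x])" using is_path_prefix by blast
  moreover have "hd (ys @ [x]) = a" using assms unfolding path_from_to_def by (cases ys) auto
  ultimately show ?thesis unfolding path_from_to_def by simp
qed

lemma path_join:
  assumes "path_from_to E a b p1" "path_from_to E c d (ys @ b # zs)"
  shows "path_from_to E a d (p1 @ zs) \<or> (zs = [] \<and> b = d)"
proof (cases zs)
  case Nil then show ?thesis using assms unfolding path_from_to_def by simp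
next
  case (Cons z zs')
  have p: "is_path E (ys @ [b] @ zs)" using assms(2) unfolding path_from_to_def by simp
  then have "is_path E ([b] @ zs)" using is_path_suffix by (metis append_assoc append_is_Nil_conv not_Cons_self2)
  then have "(b, z) \<in> E" "is_path E zs" using Cons is_path_append[of "[b]" zs E] by auto
  moreover have "p1 \<noteq> []" using assms(1) path_ne by metis
  ultimately have "is_path E (p1 @ zs)" using Cons assms(1) unfolding path_from_to_def
    by (simp add: is_path_append)
  then show ?thesis using assms Cons \<open>p1 \<noteq> []\<close> unfolding path_from_to_def by simp
qed

locale fg =
  fixes V :: "'a set" and E :: "('a \<times> 'a) set" and s :: 'a
  assumes finV: "finite V" and Esub: "E \<subseteq> V \<times> V"
    and sc: "strongly_connected V E" and sV: "s \<in> V"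
begin

abbreviation dm where "dm \<equiv> dominates V E s"

lemma reach: "b \<in> V \<Longrightarrow> \<exists>p. path_from_to E s b p"
  using sc sV unfolding strongly_connected_def by blast

lemma dom_refl: "w \<in> V \<Longrightarrow> dm w w"
  unfolding dominates_def path_from_to_def using last_in_set is_path_def by metis

lemma dom_s: "w \<in> V \<Longrightarrow> dm s w"
  unfolding dominates_def path_from_to_def using hd_in_set is_path_def sV by metis

lemma dom_V: "dm a b \<Longrightarrow> a \<in> V \<and> b \<in> V"
  unfolding dominates_def by simp

lemma dom_trans:
  assumes "dm a b" "dm b c" shows "dm a c"
  unfolding dominates_def
proof (intro conjI allI impI)
  show "a \<in> V" "c \<in> V" using assms dom_V by auto
  fix p assume p: "path_from_to E s c p"
  then have "b \<in> set p" using assms(2) unfolding dominates_def by blast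
  then obtain ys zs where "p = ys @ b # zs" by (metis split_list)
  then have "path_from_to E s b (ys @ [b])" using p path_split by metis
  then have "a \<in> set (ys @ [b])" using assms(1) unfolding dominates_def by blast
  then show "a \<in> set p" using \<open>p = ys @ b # zs\<close> by auto
qed

lemma dom_antisym:
  assumes "dm a b" "dm b a" shows "a = b"
proof (rule ccontr)
  assume ne: "a \<noteq> b"
  obtain p where p: "path_from_to E s b p" using reach assms dom_V by blast
  then have "b \<in> set p" unfolding path_from_to_def is_path_def using last_in_set by metis
  then obtain ys zs where yz: "p = ys @ b # zs" "b \<notin> set ys" by (metis split_list_first)
  then have q: "path_from_to E s b (ys @ [b])" using p path_split by metis
  then have "a \<in> set ys" using assms(1) ne unfolding dominates_def by auto
  then obtain ys1 ys2 where "ys = ys1 @ a # ys2" by (metis split_list)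
  then have "path_from_to E s a (ys1 @ [a])" using q path_split[of E s b ys1 a "ys2 @ [b]"] by simp
  then have "b \<in> set (ys1 @ [a])" using assms(2) unfolding dominates_def by blast
  then show False using ne yz(2) \<open>ys = ys1 @ a # ys2\<close> by auto
qed

lemma not_dom_path:
  assumes "a \<in> V" "b \<in> V" "\<not> dm a b"
  shows "\<exists>p. path_from_to E s b p \<and> a \<notin> set p"
  using assms unfolding dominates_def by blast

lemma dom_chain:
  assumes "dm a c" "dm b c" shows "dm a b \<or> dm b a"
proof (rule ccontr)
  assume nn: "\<not> (dm a b \<or> dm b a)"
  have V: "a \<in> V" "b \<in> V" "c \<in> V" using assms dom_V by auto
  obtain p1 where p1: "path_from_to E s b p1" "a \<notin> set p1" using not_dom_path V nn by blast
  obtain p2 where p2: "path_from_to E s a p2" "b \<notin> set p2" using not_dom_path V nn by blast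
  obtain p where p: "path_from_to E s c p" using reach V by blast
  have "a \<in> set p" using p assms(1) unfolding dominates_def by blast
  then obtain ys x zs where x: "p = ys @ x # zs" "x = a \<or> x = b" "\<forall>z\<in>set zs. \<not> (z = a \<or> z = b)"
    using split_list_last_prop[of p "\<lambda>z. z = a \<or> z = b"] by blast
  show False
  proof (cases "x = b")
    case True
    have "path_from_to E s c (p1 @ zs) \<or> (zs = [] \<and> b = c)"
      using path_join[OF p1(1), of s c ys zs] p x True by simp
    then show ?thesis
    proof
      assume "path_from_to E s c (p1 @ zs)"
      then have "a \<in> set (p1 @ zs)" using assms(1) unfolding dominates_def by blast
      then show False using p1 x by auto
    next
      assume "zs = [] \<and> b = c"
      then have "a \<in> set p1" using p1 assms(1) unfolding dominates_def by blast
      then show False using p1 by simp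
    qed
  next
    case False
    then have xa: "x = a" using x by simp
    have "path_from_to E s c (p2 @ zs) \<or> (zs = [] \<and> a = c)"
      using path_join[OF p2(1), of s c ys zs] p x xa by simp
    then show ?thesis
    proof
      assume "path_from_to E s c (p2 @ zs)"
      then have "b \<in> set (p2 @ zs)" using assms(2) unfolding dominates_def by blast
      then show False using p2 x by auto
    next
      assume "zs = [] \<and> a = c"
      then have "b \<in> set p2" using p2 assms(2) unfolding dominates_def by blast
      then show False using p2 by simp
    qed
  qed
qed

lemma dom_max:
  assumes "finite S" "S \<noteq> {}" "\<forall>x\<in>S. dm x w"
  shows "\<exists>m\<in>S. \<forall>x\<in>S. dm x m"
  using assms
proof (induction S rule: finite_ne_induct)
  case (singleton x)
  then show ?case using dom_refl dom_V by blast
next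
  case (insert x F)
  then obtain m where m: "m \<in> F" "\<forall>y\<in>F. dm y m" by auto
  have "dm m w" "dm x w" using insert.prems m by auto
  then have "dm m x \<or> dm x m" using dom_chain by blast
  then show ?case
  proof
    assume "dm m x"
    then show ?thesis using m dom_trans dom_refl dom_V by blast
  next
    assume "dm x m"
    then show ?thesis using m by blast
  qed
qed


lemma idom_props:
  assumes "w \<in> V" "w \<noteq> s"
  shows "strictly_dominates V E s (idom V E s w) w \<and>
     (\<forall>x. strictly_dominates V E s x w \<longrightarrow> dm x (idom V E s w))"
proof -
  let ?S = "{x. strictly_dominates V E s x w}"
  have sub: "?S \<subseteq> V" unfolding strictly_dominates_def dominates_def by blast
  have fin: "finite ?S" using finV sub finite_subset by blast
  have sS: "s \<in> ?S" using dom_s[OF assms(1)] assms(2) unfolding strictly_dominates_def by simp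
  have all: "\<forall>x\<in>?S. dm x w" unfolding strictly_dominates_def by simp
  obtain m where m: "m \<in> ?S" "\<forall>x\<in>?S. dm x m"
    using dom_max[OF fin _ all] sS by blast
  have "\<exists>!u. strictly_dominates V E s u w \<and> (\<forall>x. strictly_dominates V E s x w \<longrightarrow> dm x u)"
  proof (rule ex1I[of _ m])
    show "strictly_dominates V E s m w \<and> (\<forall>x. strictly_dominates V E s x w \<longrightarrow> dm x m)" using m by auto
  next
    fix u assume "strictly_dominates V E s u w \<and> (\<forall>x. strictly_dominates V E s x w \<longrightarrow> dm x u)"
    then have "dm m u" "dm u m" using m by auto
    then show "u = m" using dom_antisym by blast
  qed
  then show ?thesis unfolding idom_def by (rule theI')
qed

lemma tree_root_props:
  assumes "v \<in> V"
  shows "dm (tree_root V E s v) v \<and> (tree_root V E s v = s \<or> marked V E s (tree_root V E s v)) \<and>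
     (\<forall>y. dm y v \<and> (y = s \<or> marked V E s y) \<longrightarrow> dm y (tree_root V E s v))"
proof -
  let ?S = "{x. dm x v \<and> (x = s \<or> marked V E s x)}"
  have sub: "?S \<subseteq> V" unfolding dominates_def by blast
  have fin: "finite ?S" using finV sub finite_subset by blast
  have sS: "s \<in> ?S" using dom_s[OF assms(1)] by simp
  have all: "\<forall>x\<in>?S. dm x v" by simp
  obtain m where m: "m \<in> ?S" "\<forall>x\<in>?S. dm x m"
    using dom_max[OF fin _ all] sS by blast
  have "\<exists>!r. dm r v \<and> (r = s \<or> marked V E s r) \<and> (\<forall>y. dm y v \<and> (y = s \<or> marked V E s y) \<longrightarrow> dm y r)"
  proof (rule ex1I[of _ m])
    show "dm m v \<and> (m = s \<or> marked V E s m) \<and> (\<forall>y. dm y v \<and> (y = s \<or> marked V E s y) \<longrightarrow> dm y m)"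
      using m by auto
  next
    fix r assume "dm r v \<and> (r = s \<or> marked V E s r) \<and> (\<forall>y. dm y v \<and> (y = s \<or> marked V E s y) \<longrightarrow> dm y r)"
    then have "dm m r" "dm r m" using m by auto
    then show "r = m" using dom_antisym by blast
  qed
  then show ?thesis unfolding tree_root_def by (rule theI')
qed

lemma tree_root_self:
  assumes "r = s \<or> marked V E s r"
  shows "tree_root V E s r = r"
proof -
  have rV: "r \<in> V" using assms sV unfolding marked_def by auto
  have T: "dm (tree_root V E s r) r \<and> (tree_root V E s r = s \<or> marked V E s (tree_root V E s r)) \<and>
     (\<forall>y. dm y r \<and> (y = s \<or> marked V E s y) \<longrightarrow> dm y (tree_root V E s r))"
    by (rule tree_root_props[OF rV])
  have "dm r r" by (rule dom_refl[OF rV])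
  then have "dm r (tree_root V E s r)" using T assms by blast
  moreover have "dm (tree_root V E s r) r" using T by blast
  ultimately show ?thesis using dom_antisym by blast
qed

end

theorem mainTheorem6:
  fixes V :: "'a set" and E :: "('a \<times> 'a) set" and s u v :: 'a
  assumes "digraph V E"
    and "strongly_connected V E"
    and "s \<in> V"
    and "(u, v) \<in> E"
    and "tree_root V E s u \<noteq> tree_root V E s v"
  shows "(u = idom V E s v \<and> bridge V E s u v) \<or>
         (dominates V E s (tree_root V E s v) u \<and> u \<noteq> tree_root V E s v)"
proof -
  interpret fg V E s using assms unfolding digraph_def by unfold_locales auto
  have uV: "u \<in> V" and vV: "v \<in> V" using assms(1,4) unfolding digraph_def by auto
  define R where "R = tree_root V E s v"
  have R: "dm R v" "R = s \<or> marked V E s R" using tree_root_props[OF vV] R_def by auto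
  have uR: "u \<noteq> R"
  proof
    assume "u = R"
    then have "tree_root V E s u = R" using tree_root_self R(2) by simp
    then show False using assms(5) R_def by simp
  qed
  show ?thesis
  proof (cases "v = s")
    case True
    then have "dm R s" using R by simp
    moreover have "dm s R" using dom_s[of R] dom_V[of R v] R(1) by blast
    ultimately have "R = s" using dom_antisym by blast
    then show ?thesis using dom_s[OF uV] uR R_def by simp
  next
    case vs: False
    define d where "d = idom V E s v"
    have d: "strictly_dominates V E s d v" "\<forall>x. strictly_dominates V E s x v \<longrightarrow> dm x d"
      using idom_props[OF vV vs] d_def by auto
    have du: "dm d u" unfolding dominates_def
    proof (intro conjI allI impI)
      show "d \<in> V" using d unfolding strictly_dominates_def dominates_def by simp
      show "u \<in> V" by (rule uV)
      fix p assume p: "path_from_to E s u p"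
      then have "path_from_to E s v (p @ [v])" using path_snoc assms(4) by metis
      then have "d \<in> set (p @ [v])" using d unfolding strictly_dominates_def dominates_def by blast
      then show "d \<in> set p" using d unfolding strictly_dominates_def by auto
    qed
    show ?thesis
    proof (cases "R = v")
      case True
      then have mk: "marked V E s v" using R vs by auto
      then have br: "bridge V E s d v" unfolding marked_def d_def by simp
      show ?thesis
      proof (cases "u = d")
        case True then show ?thesis using br d_def by simp
      next
        case ud: False
        have "dm v u" unfolding dominates_def
        proof (intro conjI allI impI)
          show "v \<in> V" "u \<in> V" using uV vV by auto
          fix p assume p: "path_from_to E s u p"
          then have "path_from_to E s v (p @ [v])" using path_snoc assms(4) by metis
          then obtain i where i: "Suc i < length (p @ [v])" "(p @ [v]) ! i = d" "(p @ [v]) ! Suc i = v"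
            using br unfolding bridge_def by blast
          show "v \<in> set p"
          proof (cases "Suc i < length p")
            case True
            then show ?thesis using i by (metis nth_append nth_mem)
          next
            case False
            then have "Suc i = length p" using i by simp
            then have ii: "i = length p - 1" "i < length p" by auto
            then have "(p @ [v]) ! i = last p" using path_ne[OF p]
              by (simp add: nth_append last_conv_nth)
            then have "d = u" using i p unfolding path_from_to_def by simp
            then show ?thesis using ud by simp
          qed
        qed
        then show ?thesis using True uR R_def by simp
      qed
    next
      case False
      then have "strictly_dominates V E s R v" using R unfolding strictly_dominates_def by simp
      then have "dm R d" using d by blast
      then have "dm R u" using du dom_trans by blast
      then show ?thesis using uR R_def by simp
    qed
  qed
qed

end
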